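(* For any matroid $M$ (not necessarily realizable) on $E=\{0,\dots,n\}$, the tuples $([\mathcal S_M]_\sigma)_\sigma$ and $([\mathcal Q_M]_\sigma)_\sigma$ of Laurent polynomials defined by $[\mathcal S_M]_\sigma=\sum_{i\in B_\sigma(M)}T_i^{-1}$ and $[\mathcal Q_M]_\sigma=\sum_{i\notin B_\sigma(M)}T_i^{-1}$ are well-defined elements of $K_T^0(X_E)$ (i.e. lie in the image of the restriction map), and $[\mathcal S_M]+[\mathcal Q_M]=[\underline{\mathbb C}^E_{\mathrm{inv}}]$.
   Context: $T=(\mathbb C^* )^E$; $X_E$ is the permutohedral variety (toric variety of the fan in $\mathbb R^E/\mathbb R\mathbf 1$ with cones $\operatorname{Cone}(\overline{\mathbf e}_{S_1},\dots,\overline{\mathbf e}_{S_k})$ for chains of nonempty proper subsets), whose $T$-fixed points $p_\sigma$ are indexed by permutations $\sigma$ of $E$. The restriction map $K_T^0(X_E)\to\prod_{\sigma}\mathbb Z[T_0^{\pm1},\dots,T_n^{\pm1}]$ is injective, with image the tuples $(f_\sigma)$ such that $f_\sigma\equiv f_{\sigma'}\bmod(1-T_{\sigma(i+1)}/T_{\sigma(i)})$ whenever $\sigma'=\sigma\circ(i,i+1)$. $B_\sigma(M)$ is the lexicographically first basis of $M$ for the order $\sigma(0)\prec\cdots\prec\sigma(n)$. $\underline{\mathbb C}^E_{\mathrm{inv}}=X_E\times\mathbb C^E$ with $T$ acting by $t\cdot x=(t_i^{-1}x_i)$; its class restricts to $\sum_{i\in E}T_i^{-1}$ at every $p_\sigma$.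 *)

theory Defs
  imports Main "HOL-Library.Poly_Mapping" "HOL-Combinatorics.Transposition"
    "HOL-Combinatorics.Permutations"
begin

text \<open>Laurent polynomials Z[T_0^{+-1},...,T_n^{+-1}] as the group ring of the
  free abelian group of exponent vectors (finitely supported nat => int).\<close>
type_synonym laurent = "(nat \<Rightarrow>\<^sub>0 int) \<Rightarrow>\<^sub>0 int"

definition Tvar :: "nat \<Rightarrow> laurent" where
  "Tvar i = Poly_Mapping.single (Poly_Mapping.single i 1) 1"

definition Tinv :: "nat \<Rightarrow> laurent" where
  "Tinv i = Poly_Mapping.single (Poly_Mapping.single i (-1)) 1"

text \<open>A matroid on ground set E, given by its set of bases (basis exchange axiom).\<close>
definition matroid :: "'a set \<Rightarrow> 'a set set \<Rightarrow> bool" where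
  "matroid E M \<longleftrightarrow> finite E \<and> M \<subseteq> Pow E \<and> M \<noteq> {} \<and>
     (\<forall>B1\<in>M. \<forall>B2\<in>M. \<forall>x\<in>B1 - B2. \<exists>y\<in>B2 - B1. insert y (B1 - {x}) \<in> M)"

definition sigma_min :: "(nat \<Rightarrow> nat) \<Rightarrow> nat set \<Rightarrow> nat" where
  "sigma_min \<sigma> S = \<sigma> (LEAST k. \<sigma> k \<in> S)"

definition lex_first_basis :: "(nat \<Rightarrow> nat) \<Rightarrow> nat set set \<Rightarrow> nat set" where
  "lex_first_basis \<sigma> M = (THE B. B \<in> M \<and>
     (\<forall>B'\<in>M. B' \<noteq> B \<longrightarrow> sigma_min \<sigma> ((B - B') \<union> (B' - B)) \<in> B))"

text \<open>Image of the restriction map K_T^0(X_E) -> prod_sigma Z[T^{+-1}], E = {0..n}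
  (GKM-type description).\<close>
definition KT0 :: "nat \<Rightarrow> ((nat \<Rightarrow> nat) \<Rightarrow> laurent) set" where
  "KT0 n = {f. \<forall>\<sigma> i. \<sigma> permutes {0..n} \<and> i < n \<longrightarrow>
      (1 - Tvar (\<sigma> (i+1)) * Tinv (\<sigma> i)) dvd (f \<sigma> - f (\<sigma> \<circ> Transposition.transpose i (i+1)))}"

definition S_class :: "nat \<Rightarrow> nat set set \<Rightarrow> (nat \<Rightarrow> nat) \<Rightarrow> laurent" where
  "S_class n M \<sigma> = (\<Sum>i\<in>lex_first_basis \<sigma> M. Tinv i)"

definition Q_class :: "nat \<Rightarrow> nat set set \<Rightarrow> (nat \<Rightarrow> nat) \<Rightarrow> laurent" where
  "Q_class n M \<sigma> = (\<Sum>i\<in>{0..n} - lex_first_basis \<sigma> M. Tinv i)"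

definition Cinv_class :: "nat \<Rightarrow> (nat \<Rightarrow> nat) \<Rightarrow> laurent" where
  "Cinv_class n \<sigma> = (\<Sum>i\<in>{0..n}. Tinv i)"

end

theory Submission
  imports Defs
begin


lemma TT: "Tvar b * Tinv b = 1"
  unfolding Tvar_def Tinv_def by (simp add: mult_single single_add[symmetric])

lemma dv1: "Tinv a - Tinv b = (1 - Tvar b * Tinv a) * (- Tinv b)"
proof -
  have "(1 - Tvar b * Tinv a) * (- Tinv b) = - Tinv b + Tinv a * (Tvar b * Tinv b)"
    by (simp add: algebra_simps)
  then show ?thesis by (simp add: TT)
qed

lemma exch: "matroid V M \<Longrightarrow> B1\<in>M \<Longrightarrow> B2\<in>M \<Longrightarrow> x\<in>B1-B2 \<Longrightarrow> \<exists>y\<in>B2-B1. insert y (B1-{x}) \<in> M"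
  unfolding matroid_def by blast

lemma smin_eq:
  assumes "\<sigma> permutes V" "x \<in> S" "\<forall>s\<in>S. inv \<sigma> x \<le> inv \<sigma> s"
  shows "sigma_min \<sigma> S = x"
proof -
  have b: "bij \<sigma>" using assms(1) permutes_bij by blast
  have "(LEAST k. \<sigma> k \<in> S) = inv \<sigma> x"
  proof (rule Least_equality)
    show "\<sigma> (inv \<sigma> x) \<in> S" using assms permutes_inverses(1) by metis
    fix k assume "\<sigma> k \<in> S"
    then have "inv \<sigma> x \<le> inv \<sigma> (\<sigma> k)" using assms by blast
    then show "inv \<sigma> x \<le> k" using b by (simp add: bij_is_inj)
  qed
  then show ?thesis unfolding sigma_min_def using assms(1) permutes_inverses(1) by metis
qed

lemma smin_in:
  assumes "\<sigma> permutes V" "S \<noteq> {}"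
  shows "sigma_min \<sigma> S \<in> S \<and> (\<forall>s\<in>S. inv \<sigma> (sigma_min \<sigma> S) \<le> inv \<sigma> s)"
proof -
  have b: "bij \<sigma>" using assms(1) permutes_bij by blast
  obtain s where s: "s \<in> S" using assms by blast
  have ex: "\<exists>k. \<sigma> k \<in> S" using s assms(1) permutes_inverses(1) by metis
  have 1: "\<sigma> (LEAST k. \<sigma> k \<in> S) \<in> S" using LeastI_ex[OF ex] .
  have 2: "(LEAST k. \<sigma> k \<in> S) \<le> inv \<sigma> t" if "t \<in> S" for t
    using that assms(1) permutes_inverses(1) by (metis (mono_tags, lifting) Least_le)
  show ?thesis unfolding sigma_min_def using 1 2 b by (simp add: bij_is_inj)
qed


lemma equicard_aux:
  assumes m: "matroid V M"
  shows "B1 \<in> M \<Longrightarrow> B2 \<in> M \<Longrightarrow> card B1 < card B2 \<Longrightarrow> False"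
proof (induction "card (B1 - B2)" arbitrary: B1 rule: less_induct)
  case less
  have fin: "finite V" "M \<subseteq> Pow V" using m unfolding matroid_def by blast+
  then have f1: "finite B1" "finite B2" using less.prems finite_subset by blast+
  show False
  proof (cases "B1 - B2 = {}")
    case True
    then have "B1 \<subset> B2" using less.prems(3) by auto
    then obtain x where "x \<in> B2 - B1" by blast
    then show False using exch[OF m less.prems(2,1)] True by blast
  next
    case False
    then obtain x where x: "x \<in> B1 - B2" by blast
    then obtain y where y: "y \<in> B2 - B1" "insert y (B1 - {x}) \<in> M"
      using exch[OF m less.prems(1,2)] by blast
    have c1: "card (B1 - {x}) = card B1 - 1" using x by (simp add: card_Diff_singleton)
    have c2: "card B1 > 0" using f1 x card_gt_0_iff by blast
    have c3: "card (insert y (B1 - {x})) = Suc (card (B1 - {x}))" using f1 y by simp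
    have "card (insert y (B1 - {x})) = card B1" using c1 c2 c3 by simp
    moreover have "insert y (B1 - {x}) - B2 = (B1 - B2) - {x}" using y by auto
    moreover have "card ((B1 - B2) - {x}) < card (B1 - B2)" using x f1
      by (meson card_Diff1_less finite_Diff)
    ultimately have "card (insert y (B1 - {x}) - B2) < card (B1 - B2)" "card (insert y (B1 - {x})) < card B2"
      using less.prems(3) by simp_all
    then show False using less.hyps[OF _ y(2) less.prems(2)] by blast
  qed
qed

lemma equicard:
  assumes "matroid V M" "B1 \<in> M" "B2 \<in> M"
  shows "card B1 = card B2"
proof (rule ccontr)
  assume "card B1 \<noteq> card B2"
  then have "card B1 < card B2 \<or> card B2 < card B1" by linarith
  then show False
  proof
    assume "card B1 < card B2" then show False using equicard_aux[OF assms(1) assms(2,3)] by simp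
  next
    assume "card B2 < card B1" then show False using equicard_aux[OF assms(1) assms(3,2)] by simp
  qed
qed

definition lexP :: "(nat \<Rightarrow> nat) \<Rightarrow> nat set set \<Rightarrow> nat set \<Rightarrow> bool" where
  "lexP \<sigma> M B \<longleftrightarrow> B \<in> M \<and>
     (\<forall>B'\<in>M. B' \<noteq> B \<longrightarrow> sigma_min \<sigma> ((B - B') \<union> (B' - B)) \<in> B)"

lemma lexP_unique:
  assumes "\<sigma> permutes V" "lexP \<sigma> M B1" "lexP \<sigma> M B2"
  shows "B1 = B2"
proof (rule ccontr)
  assume ne: "B1 \<noteq> B2"
  define S where "S = (B1 - B2) \<union> (B2 - B1)"
  have S2: "(B2 - B1) \<union> (B1 - B2) = S" unfolding S_def by blast
  have "S \<noteq> {}" using ne unfolding S_def by blast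
  then have "sigma_min \<sigma> S \<in> S" using smin_in[OF assms(1)] by simp
  moreover have "sigma_min \<sigma> S \<in> B1" using assms(2,3) ne unfolding lexP_def S_def by simp
  moreover have "sigma_min \<sigma> S \<in> B2" using assms(2,3) ne S2 unfolding lexP_def by metis
  ultimately show False unfolding S_def by blast
qed

lemma lexP_exists:
  assumes m: "matroid {0..n} M" and sg: "\<sigma> permutes {0..n}"
  shows "\<exists>B. lexP \<sigma> M B"
proof -
  have M: "finite M" "M \<noteq> {}" "M \<subseteq> Pow {0..n}" using m unfolding matroid_def
    by (auto intro: finite_subset)
  define w where "w B = (\<Sum>x\<in>B. n - inv \<sigma> x)" for B
  have "Max (w ` M) \<in> w ` M" using M by simp
  then obtain B where B1: "B \<in> M" and Bmax: "w B = Max (w ` M)" by auto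
  have B2: "\<forall>E\<in>M. w E \<le> w B" using M Bmax by simp
  have Bsub: "B \<subseteq> {0..n}" using B1 M by blast
  then have Bfin: "finite B" using finite_subset by blast
  have injs: "inv \<sigma> a = inv \<sigma> b \<Longrightarrow> a = b" for a b
    using sg permutes_inverses(1) by metis
  have key: "E \<in> M \<Longrightarrow> E \<noteq> B \<Longrightarrow> sigma_min \<sigma> ((B - E) \<union> (E - B)) \<in> B" for E
  proof (induction "card (E - B)" arbitrary: E rule: less_induct)
    case less
    define S where "S = (B - E) \<union> (E - B)"
    define s where "s = sigma_min \<sigma> S"
    have Sne: "S \<noteq> {}" using less.prems unfolding S_def by blast
    have sS: "s \<in> S" and smin: "\<forall>t\<in>S. inv \<sigma> s \<le> inv \<sigma> t"
      using smin_in[OF sg Sne] unfolding s_def by auto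
    have Esub: "E \<subseteq> {0..n}" using less.prems M by blast
    then have Efin: "finite E" using finite_subset by blast
    show ?case unfolding S_def[symmetric] s_def[symmetric]
    proof (rule ccontr)
      assume "s \<notin> B"
      then have sE: "s \<in> E - B" using sS unfolding S_def by blast
      show False
      proof (cases "\<exists>z\<in>E-B. z \<noteq> s")
        case True
        then obtain z where z: "z \<in> E - B" "z \<noteq> s" by blast
        obtain y where y: "y \<in> B - E" "insert y (E - {z}) \<in> M"
          using exch[OF m less.prems(1) B1 z(1)] by blast
        define E' where "E' = insert y (E - {z})"
        have "E' - B = (E - B) - {z}" using y unfolding E'_def by auto
        moreover have "card ((E - B) - {z}) < card (E - B)" using z Efin
          by (meson card_Diff1_less finite_Diff)
        ultimately have clt: "card (E' - B) < card (E - B)" by simp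
        have sE': "s \<in> E' - B" using sE z unfolding E'_def by auto
        then have ne: "E' \<noteq> B" by blast
        have sub: "(B - E') \<union> (E' - B) \<subseteq> S" using y z unfolding E'_def S_def by auto
        have "sigma_min \<sigma> ((B - E') \<union> (E' - B)) = s"
          using smin_eq[OF sg, of s "(B - E') \<union> (E' - B)"] sE' sub smin by blast
        moreover have "sigma_min \<sigma> ((B - E') \<union> (E' - B)) \<in> B"
          using less.hyps[OF clt _ ne] y(2) unfolding E'_def by blast
        ultimately show False using sE by blast
      next
        case False
        then have EB: "E - B = {s}" using sE by blast
        show False
        proof (cases "B - E = {}")
          case True
          then show False using exch[OF m less.prems(1) B1 sE] by blast
        next
          case False
          then obtain t where t: "t \<in> B - E" by blast
          obtain y where y: "y \<in> E - B" "insert y (B - {t}) \<in> M"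
            using exch[OF m B1 less.prems(1) t] by blast
          have ys: "y = s" using y EB by blast
          have tS: "t \<in> S" "t \<noteq> s" using t sE unfolding S_def by auto
          have "inv \<sigma> s \<noteq> inv \<sigma> t" using tS(2) injs by blast
          then have lt: "inv \<sigma> s < inv \<sigma> t" using smin tS(1) by fastforce
          have "inv \<sigma> t \<in> {0..n}" using t Bsub permutes_in_image[OF permutes_inv[OF sg]] by blast
          then have tn: "inv \<sigma> t \<le> n" by simp
          have w1: "w (insert s (B - {t})) = (n - inv \<sigma> s) + w (B - {t})"
            unfolding w_def using Bfin sE by (simp add: sum.insert)
          have w2: "w B = (n - inv \<sigma> t) + w (B - {t})"
            unfolding w_def using Bfin t sum.remove[OF Bfin, of t] by blast
          have "w (insert s (B - {t})) > w B" using w1 w2 lt tn by linarith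
          moreover have "w (insert s (B - {t})) \<le> w B" using B2 y(2) ys by blast
          ultimately show False by linarith
        qed
      qed
    qed
  qed
  then show ?thesis unfolding lexP_def using B1 by blast
qed

lemma lfb:
  assumes m: "matroid {0..n} M" and sg: "\<sigma> permutes {0..n}"
  shows "lexP \<sigma> M (lex_first_basis \<sigma> M)"
proof -
  have e: "\<exists>!B. lexP \<sigma> M B" using lexP_exists[OF m sg] lexP_unique[OF sg] by blast
  have "lex_first_basis \<sigma> M = (THE B. lexP \<sigma> M B)"
    unfolding lex_first_basis_def lexP_def by simp
  then show ?thesis using theI'[OF e] by simp
qed

lemma gale_base:
  assumes m: "matroid {0..n} M" and sg: "\<sigma> permutes {0..n}" and L: "lexP \<sigma> M B"
    and E: "E \<in> M" and EBP: "E - B \<subseteq> {x. inv \<sigma> x < k}"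
  shows "card (E \<inter> {x. inv \<sigma> x < k}) \<le> card (B \<inter> {x. inv \<sigma> x < k})"
proof -
  define P where "P = {x. inv \<sigma> x < k}"
  have M: "M \<subseteq> Pow {0..n}" using m unfolding matroid_def by blast
  have B1: "B \<in> M" using L unfolding lexP_def by blast
  have Bfin: "finite B" using B1 M finite_subset by blast
  have Efin: "finite E" using E M finite_subset by blast
  have EBP: "E - B \<subseteq> P" using EBP unfolding P_def .
    have BEP: "B - E \<subseteq> P"
    proof
      fix x assume x: "x \<in> B - E"
      obtain y where y: "y \<in> E - B" "insert y (B - {x}) \<in> M"
        using exch[OF m B1 E x] by blast
      define F where "F = insert y (B - {x})"
      have FM: "F \<in> M" unfolding F_def by (rule y(2))
      have yF: "y \<in> F" unfolding F_def by simp
      have FB: "F \<noteq> B" using yF y(1) by auto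
      have sd: "(B - F) \<union> (F - B) = {x, y}" using x y unfolding F_def by auto
      have LL: "\<forall>B'\<in>M. B' \<noteq> B \<longrightarrow> sigma_min \<sigma> ((B - B') \<union> (B' - B)) \<in> B"
        using L unfolding lexP_def by (rule conjunct2)
      have "sigma_min \<sigma> ((B - F) \<union> (F - B)) \<in> B" using LL FM FB by simp
      then have s1: "sigma_min \<sigma> {x, y} \<in> B" using sd by simp
      have s2: "sigma_min \<sigma> {x, y} \<in> {x, y} \<and> (\<forall>t\<in>{x,y}. inv \<sigma> (sigma_min \<sigma> {x, y}) \<le> inv \<sigma> t)"
        using smin_in[OF sg, of "{x,y}"] by blast
      have s3: "sigma_min \<sigma> {x, y} \<in> {x, y}" using s2 by (rule conjunct1)
      have eqx: "sigma_min \<sigma> {x, y} = x" using s1 s3 y(1) by auto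
      have "inv \<sigma> (sigma_min \<sigma> {x, y}) \<le> inv \<sigma> y" using s2 by blast
      then have "inv \<sigma> x \<le> inv \<sigma> y" unfolding eqx .
      moreover have "inv \<sigma> y < k" using EBP y(1) unfolding P_def by blast
      ultimately show "x \<in> P" unfolding P_def by simp
    qed
    have ce: "card E = card B" using equicard[OF m E B1] .
    have "card E = card (E \<inter> P) + card (E - P)" using Efin by (rule card_Int_Diff)
    moreover have "card B = card (B \<inter> P) + card (B - P)" using Bfin by (rule card_Int_Diff)
    moreover have "B - P \<subseteq> E - P" using BEP by blast
    then have "card (B - P) \<le> card (E - P)" using Efin by (simp add: card_mono)
    ultimately show "card (E \<inter> P) \<le> card (B \<inter> P)" using ce by linarith
qed

lemma gale:
  assumes m: "matroid {0..n} M" and sg: "\<sigma> permutes {0..n}" and L: "lexP \<sigma> M B"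
  shows "E \<in> M \<Longrightarrow> card (E \<inter> {x. inv \<sigma> x < k}) \<le> card (B \<inter> {x. inv \<sigma> x < k})"
proof (induction "card (E - B)" arbitrary: E rule: less_induct)
  case less
  define P where "P = {x. inv \<sigma> x < k}"
  have M: "M \<subseteq> Pow {0..n}" using m unfolding matroid_def by blast
  have B1: "B \<in> M" using L unfolding lexP_def by blast
  have Bfin: "finite B" using B1 M finite_subset by blast
  have Efin: "finite E" using less.prems M finite_subset by blast
  show ?case unfolding P_def[symmetric]
  proof (cases "\<exists>z\<in>E-B. z \<notin> P")
    case True
    then obtain z where z: "z \<in> E - B" "z \<notin> P" by blast
    obtain y where y: "y \<in> B - E" "insert y (E - {z}) \<in> M"
      using exch[OF m less.prems(1) B1 z(1)] by blast
    define E' where "E' = insert y (E - {z})"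
    have "E' - B = (E - B) - {z}" using y(1) unfolding E'_def by auto
    moreover have "card ((E - B) - {z}) < card (E - B)"
      using card_Diff1_less[OF finite_Diff[OF Efin] z(1)] .
    ultimately have clt: "card (E' - B) < card (E - B)" by simp
    have E'fin: "finite E'" unfolding E'_def using Efin by simp
    have "E \<inter> P \<subseteq> E' \<inter> P" using z(2) unfolding E'_def by blast
    moreover have "finite (E' \<inter> P)" using E'fin by simp
    ultimately have c1: "card (E \<inter> P) \<le> card (E' \<inter> P)" by (simp add: card_mono)
     have E'M: "E' \<in> M" unfolding E'_def by (rule y(2))
    have "card (E' \<inter> {x. inv \<sigma> x < k}) \<le> card (B \<inter> {x. inv \<sigma> x < k})"
      using clt E'M by (rule less.hyps)
    then have "card (E' \<inter> P) \<le> card (B \<inter> P)" unfolding P_def .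
    then show "card (E \<inter> P) \<le> card (B \<inter> P)" using c1 by linarith
  next
    case False
    then have "E - B \<subseteq> P" by blast
    then show "card (E \<inter> P) \<le> card (B \<inter> P)" unfolding P_def using gale_base[OF m sg L less.prems(1)] by blast
  qed
qed

lemma pre_swap:
  fixes k i p :: nat
  assumes "k \<noteq> i + 1"
  shows "(Transposition.transpose i (i+1) p < k) = (p < k)"
proof -
  have "p = i \<or> p = i + 1 \<or> (p \<noteq> i \<and> p \<noteq> i + 1)" by blast
  then show ?thesis
  proof (elim disjE)
    assume "p = i" then show ?thesis using assms by (simp add: transpose_def) presburger
  next
    assume "p = i + 1" then show ?thesis using assms by (simp add: transpose_def) presburger
  next
    assume "p \<noteq> i \<and> p \<noteq> i + 1" then show ?thesis by (simp add: transpose_def)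
  qed
qed

lemma swap_main:
  assumes m: "matroid {0..n} M" and sg: "\<sigma> permutes {0..n}" and i: "i < n"
  shows "lex_first_basis \<sigma> M - {\<sigma> i, \<sigma> (i+1)} =
         lex_first_basis (\<sigma> \<circ> Transposition.transpose i (i+1)) M - {\<sigma> i, \<sigma> (i+1)}"
proof -
  define \<tau> where "\<tau> = Transposition.transpose i (i+1)"
  have tp: "\<tau> permutes {0..n}" unfolding \<tau>_def using i by (intro permutes_swap_id) auto
  have sg': "\<sigma> \<circ> \<tau> permutes {0..n}" by (rule permutes_compose[OF tp sg])
  define B where "B = lex_first_basis \<sigma> M"
  define B' where "B' = lex_first_basis (\<sigma> \<circ> \<tau>) M"
  have L: "lexP \<sigma> M B" unfolding B_def by (rule lfb[OF m sg])
  have L': "lexP (\<sigma> \<circ> \<tau>) M B'" unfolding B'_def by (rule lfb[OF m sg'])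
  have BM: "B \<in> M" using L unfolding lexP_def by (rule conjunct1)
  have B'M: "B' \<in> M" using L' unfolding lexP_def by (rule conjunct1)
  have Mp: "M \<subseteq> Pow {0..n}" using m unfolding matroid_def by blast
  have Bsub: "B \<subseteq> {0..n}" using BM Mp by auto
  have B'sub: "B' \<subseteq> {0..n}" using B'M Mp by auto
  have Bfin: "finite B" using Bsub finite_subset by auto
  have B'fin: "finite B'" using B'sub finite_subset by auto
  have invc: "inv (\<sigma> \<circ> \<tau>) x = \<tau> (inv \<sigma> x)" for x
  proof -
    have "inv (\<sigma> \<circ> \<tau>) = inv \<tau> \<circ> inv \<sigma>"
      by (rule o_inv_distrib[OF permutes_bij[OF sg] permutes_bij[OF tp]])
    then show ?thesis unfolding \<tau>_def by simp
  qed
  have pre: "{x. inv (\<sigma> \<circ> \<tau>) x < k} = {x. inv \<sigma> x < k}" if "k \<noteq> i + 1" for k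
  proof (rule set_eqI)
    fix x
    have "inv (\<sigma> \<circ> \<tau>) x = \<tau> (inv \<sigma> x)" by (rule invc)
    moreover have "(\<tau> (inv \<sigma> x) < k) = (inv \<sigma> x < k)" unfolding \<tau>_def by (rule pre_swap[OF that])
    ultimately show "(x \<in> {x. inv (\<sigma> \<circ> \<tau>) x < k}) = (x \<in> {x. inv \<sigma> x < k})" by simp
  qed
  have ceq: "card (B \<inter> {x. inv \<sigma> x < k}) = card (B' \<inter> {x. inv \<sigma> x < k})" if "k \<noteq> i + 1" for k
  proof -
    have "card (B' \<inter> {x. inv \<sigma> x < k}) \<le> card (B \<inter> {x. inv \<sigma> x < k})"
      by (rule gale[OF m sg L B'M])
    moreover have "card (B \<inter> {x. inv (\<sigma> \<circ> \<tau>) x < k}) \<le> card (B' \<inter> {x. inv (\<sigma> \<circ> \<tau>) x < k})"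
      by (rule gale[OF m sg' L' BM])
    ultimately show ?thesis unfolding pre[OF that] by linarith
  qed
  have injs: "inv \<sigma> a = inv \<sigma> b \<Longrightarrow> a = b" for a b
    using sg permutes_inverses(1) by metis
  have mem: "(x \<in> B) = (x \<in> B')" if x: "x \<notin> {\<sigma> i, \<sigma> (i+1)}" for x
  proof (cases "x \<in> {0..n}")
    case False
    then show ?thesis using Bsub B'sub by blast
  next
    case True
    define k where "k = inv \<sigma> x"
    have sk: "\<sigma> k = x" unfolding k_def using sg permutes_inverses(1) by metis
    have k1: "k \<noteq> i" using sk x by auto
    have k2: "k \<noteq> i + 1" using sk x by auto
    have split: "{y. inv \<sigma> y < Suc k} = {y. inv \<sigma> y < k} \<union> {x}"
    proof (rule set_eqI)
      fix y
      show "(y \<in> {y. inv \<sigma> y < Suc k}) = (y \<in> {y. inv \<sigma> y < k} \<union> {x})"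
        using injs[of y x] unfolding k_def by auto
    qed
    have xn: "x \<notin> {y. inv \<sigma> y < k}" unfolding k_def by simp
    have cs: "card (X \<inter> {y. inv \<sigma> y < Suc k}) = card (X \<inter> {y. inv \<sigma> y < k}) + card (X \<inter> {x})"
      if "finite X" for X
    proof -
      have "X \<inter> {y. inv \<sigma> y < Suc k} = (X \<inter> {y. inv \<sigma> y < k}) \<union> (X \<inter> {x})"
        unfolding split by (rule Int_Un_distrib)
      moreover have "(X \<inter> {y. inv \<sigma> y < k}) \<inter> (X \<inter> {x}) = {}" using xn by auto
      ultimately show ?thesis using that by (simp add: card_Un_disjoint)
    qed
    have "card (B \<inter> {x}) = card (B' \<inter> {x})"
      using cs[OF Bfin] cs[OF B'fin] ceq[OF k2] ceq[of "Suc k"] k1 by simp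
    then show ?thesis by (cases "x \<in> B"; cases "x \<in> B'") auto
  qed
  show ?thesis unfolding B_def[symmetric] \<tau>_def[symmetric] B'_def[symmetric]
  proof (rule set_eqI)
    fix x
    show "(x \<in> B - {\<sigma> i, \<sigma> (i + 1)}) = (x \<in> B' - {\<sigma> i, \<sigma> (i + 1)})"
      using mem[of x] by auto
  qed
qed

lemma sub2_cases:
  assumes "X \<subseteq> {a, b}" "Y \<subseteq> {a, b}" "card X = card Y" "a \<noteq> b"
  shows "X = Y \<or> (X = {a} \<and> Y = {b}) \<or> (X = {b} \<and> Y = {a})"
proof -
  have hx: "X = {} \<or> X = {a} \<or> X = {b} \<or> X = {a, b}" using assms(1) by auto
  have hy: "Y = {} \<or> Y = {a} \<or> Y = {b} \<or> Y = {a, b}" using assms(2) by auto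
  show ?thesis using hx hy assms(3,4) by (elim disjE) simp_all
qed

lemma dv2: "Tinv b - Tinv a = (1 - Tvar b * Tinv a) * Tinv b"
proof -
  have "Tinv b - Tinv a = - (Tinv a - Tinv b)" by simp
  also have "\<dots> = (1 - Tvar b * Tinv a) * Tinv b" unfolding dv1 by simp
  finally show ?thesis .
qed

lemma diff_dvd:
  assumes "finite B" "finite B'" "a \<noteq> b" "B - {a, b} = B' - {a, b}" "card B = card B'"
  shows "(1 - Tvar b * Tinv a) dvd ((\<Sum>x\<in>B. Tinv x) - (\<Sum>x\<in>B'. Tinv x))"
proof -
  let ?ab = "{a, b}"
  have s1: "(\<Sum>x\<in>B. Tinv x) = (\<Sum>x\<in>B \<inter> ?ab. Tinv x) + (\<Sum>x\<in>B - ?ab. Tinv x)"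
    using assms(1) by (rule sum.Int_Diff)
  have s2: "(\<Sum>x\<in>B'. Tinv x) = (\<Sum>x\<in>B' \<inter> ?ab. Tinv x) + (\<Sum>x\<in>B' - ?ab. Tinv x)"
    using assms(2) by (rule sum.Int_Diff)
  have c1: "card B = card (B \<inter> ?ab) + card (B - ?ab)" using assms(1) by (rule card_Int_Diff)
  have c2: "card B' = card (B' \<inter> ?ab) + card (B' - ?ab)" using assms(2) by (rule card_Int_Diff)
  have cc: "card (B \<inter> ?ab) = card (B' \<inter> ?ab)" using c1 c2 assms(4,5) by simp
  have d: "(\<Sum>x\<in>B. Tinv x) - (\<Sum>x\<in>B'. Tinv x) = (\<Sum>x\<in>B \<inter> ?ab. Tinv x) - (\<Sum>x\<in>B' \<inter> ?ab. Tinv x)"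
    unfolding s1 s2 assms(4) by simp
  have "B \<inter> ?ab \<subseteq> ?ab" "B' \<inter> ?ab \<subseteq> ?ab" by auto
  from sub2_cases[OF this cc assms(3)]
  have "B \<inter> ?ab = B' \<inter> ?ab \<or> (B \<inter> ?ab = {a} \<and> B' \<inter> ?ab = {b}) \<or> (B \<inter> ?ab = {b} \<and> B' \<inter> ?ab = {a})" .
  then show ?thesis
  proof (elim disjE conjE)
    assume "B \<inter> ?ab = B' \<inter> ?ab" then show ?thesis unfolding d by simp
  next
    assume "B \<inter> ?ab = {a}" "B' \<inter> ?ab = {b}"
    then have "(\<Sum>x\<in>B. Tinv x) - (\<Sum>x\<in>B'. Tinv x) = (1 - Tvar b * Tinv a) * (- Tinv b)"
      unfolding d dv1[symmetric] by simp
    then show ?thesis by (simp only: dvd_triv_left)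
  next
    assume "B \<inter> ?ab = {b}" "B' \<inter> ?ab = {a}"
    then have "(\<Sum>x\<in>B. Tinv x) - (\<Sum>x\<in>B'. Tinv x) = (1 - Tvar b * Tinv a) * Tinv b"
      unfolding d dv2[symmetric] by simp
    then show ?thesis by (simp only: dvd_triv_left)
  qed
qed

theorem proposition3p8:
  fixes n :: nat and M :: "nat set set"
  assumes "matroid {0..n} M"
  shows "S_class n M \<in> KT0 n \<and> Q_class n M \<in> KT0 n \<and>
         (\<forall>\<sigma>. \<sigma> permutes {0..n} \<longrightarrow> S_class n M \<sigma> + Q_class n M \<sigma> = Cinv_class n \<sigma>)"
proof -
  note m = assms
  have Mp: "M \<subseteq> Pow {0..n}" using m unfolding matroid_def by blast
  have sub: "lex_first_basis \<sigma> M \<subseteq> {0..n}" if "\<sigma> permutes {0..n}" for \<sigma>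
  proof -
    have "lex_first_basis \<sigma> M \<in> M" using lfb[OF m that] unfolding lexP_def by (rule conjunct1)
    then show ?thesis using Mp by auto
  qed
  have SQ: "S_class n M \<sigma> + Q_class n M \<sigma> = Cinv_class n \<sigma>" if "\<sigma> permutes {0..n}" for \<sigma>
    unfolding S_class_def Q_class_def Cinv_class_def
    using sum.subset_diff[OF sub[OF that] finite_atLeastAtMost, of Tinv] by (simp add: add.commute)
  have Sd: "(1 - Tvar (\<sigma> (i+1)) * Tinv (\<sigma> i)) dvd
              (S_class n M \<sigma> - S_class n M (\<sigma> \<circ> Transposition.transpose i (i+1)))"
    if sg: "\<sigma> permutes {0..n}" and i: "i < n" for \<sigma> i
  proof -
    have tp: "Transposition.transpose i (i+1) permutes {0..n}" using i by (intro permutes_swap_id) auto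
    have sg': "\<sigma> \<circ> Transposition.transpose i (i+1) permutes {0..n}" by (rule permutes_compose[OF tp sg])
    have ne: "\<sigma> i \<noteq> \<sigma> (i+1)" using inj_eq[OF permutes_inj[OF sg], of i "i+1"] by simp
    have B1: "lex_first_basis \<sigma> M \<in> M" using lfb[OF m sg] unfolding lexP_def by (rule conjunct1)
    have B2: "lex_first_basis (\<sigma> \<circ> Transposition.transpose i (i+1)) M \<in> M"
      using lfb[OF m sg'] unfolding lexP_def by (rule conjunct1)
    have f1: "finite (lex_first_basis \<sigma> M)" using sub[OF sg] finite_subset by auto
    have f2: "finite (lex_first_basis (\<sigma> \<circ> Transposition.transpose i (i+1)) M)"
      using sub[OF sg'] finite_subset by auto
    show ?thesis unfolding S_class_def
      by (rule diff_dvd[OF f1 f2 ne swap_main[OF m sg i] equicard[OF m B1 B2]])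
  qed
  have S: "S_class n M \<in> KT0 n" unfolding KT0_def using Sd by blast
  have Q: "Q_class n M \<in> KT0 n" unfolding KT0_def
  proof (intro CollectI allI impI, elim conjE)
    fix \<sigma> i assume sg: "\<sigma> permutes {0..n}" and i: "i < n"
    have tp: "Transposition.transpose i (i+1) permutes {0..n}" using i by (intro permutes_swap_id) auto
    have sg': "\<sigma> \<circ> Transposition.transpose i (i+1) permutes {0..n}" by (rule permutes_compose[OF tp sg])
    have "Q_class n M \<sigma> - Q_class n M (\<sigma> \<circ> Transposition.transpose i (i+1)) =
          - (S_class n M \<sigma> - S_class n M (\<sigma> \<circ> Transposition.transpose i (i+1)))"
    proof -
      have C: "Cinv_class n (\<sigma> \<circ> Transposition.transpose i (i+1)) = Cinv_class n \<sigma>"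
        unfolding Cinv_class_def ..
      have q1: "Q_class n M \<sigma> = Cinv_class n \<sigma> - S_class n M \<sigma>"
        using SQ[OF sg] by (simp add: eq_diff_eq add.commute)
      have q2: "Q_class n M (\<sigma> \<circ> Transposition.transpose i (i+1)) = Cinv_class n \<sigma> - S_class n M (\<sigma> \<circ> Transposition.transpose i (i+1))"
        using SQ[OF sg'] C by (simp add: eq_diff_eq add.commute)
      show ?thesis unfolding q1 q2 by simp
    qed
    then show "(1 - Tvar (\<sigma> (i+1)) * Tinv (\<sigma> i)) dvd
              (Q_class n M \<sigma> - Q_class n M (\<sigma> \<circ> Transposition.transpose i (i+1)))"
      using Sd[OF sg i] by (metis dvd_minus_iff minus_diff_eq)
  qed
  show ?thesis using S Q SQ by blast
qed

end
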